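(* Let $F:\mathcal C\to\mathcal D$ be a faithful functor and let $\perp$ be an independence relation on $\mathcal D$ satisfying invariance. (1) If $F$ admits $2$-completions with respect to $\perp$ and $\perp$ satisfies existence, then $F^{-1}(\perp)$ satisfies existence. (2) If $F$ admits $1$-completions, $\perp$ satisfies uniqueness, and $F^{-1}(\perp)$ satisfies existence, then $F$ admits $2$-completions with respect to $\perp$.
   Context: A commuting square consists of objects $C,A,B,M$ and morphisms $C\to A$, $C\to B$, $A\to M$, $B\to M$ with equal composites $C\to M$. An independence relation $\perp$ is a class of commuting squares (called independent); write $A\perp^M_C B$. $F^{-1}(\perp)$ consists of the commuting squares of $\mathcal C$ whose image under $F$ is in $\perp$. Invariance: for a square $C\to A,C\to B,A\to M,B\to M$ and any $M\to N$, $A\perp^M_C B$ iff the square with $A\to M\to N$, $B\to M\to N$ is independent. Existence: every span $A\leftarrow C\to B$ can be completed to an independent square. Uniqueness: any two independent squares on the same span $A\leftarrow C\to B$, with tops $M,M'$, can be amalgamated: there are $N$ and $M\to N$, $M'\to N$ such that the two composites $A\to N$ agree and the two composites $B\to N$ agree. For faithful $F$: a $1$-completion of a morphism $f:F(A)\to B$ in $\mathcal D$ is a morphism $g:A\to C$ in $\mathcal C$ together with $h:B\to F(C)$ such that $F(g)=hf$; $F$ admits $1$-completions if every such $f$ has one. A $2$-completion of a commuting $\perp$-independent square $F(C)\xrightarrow{F(c_A)}F(A)$, $F(C)\xrightarrow{F(c_B)}F(B)$, $F(A)\xrightarrow{x}D$, $F(B)\xrightarrow{y}D$ in $\mathcal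 D$ (with $c_A,c_B$ morphisms of $\mathcal C$) is an object $E$ of $\mathcal C$, a morphism $h:D\to F(E)$ and morphisms $f:A\to E$, $g:B\to E$ in $\mathcal C$ with $F(f)=hx$ and $F(g)=hy$; $F$ admits $2$-completions with respect to $\perp$ if every such independent square has a $2$-completion. *)

theory Defs
  imports Main
begin

text \<open>Categories given explicitly by objects, arrows, domain, codomain,
  composition (cmp g f = g after f) and identities.\<close>

record ('o, 'm) cat =
  Obj :: "'o set"
  Arr :: "'m set"
  dom :: "'m \<Rightarrow> 'o"
  cod :: "'m \<Rightarrow> 'o"
  cmp :: "'m \<Rightarrow> 'm \<Rightarrow> 'm"
  idm :: "'o \<Rightarrow> 'm"

definition category :: "('o, 'm) cat \<Rightarrow> bool" where
  "category C \<longleftrightarrow>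
     (\<forall>f\<in>Arr C. dom C f \<in> Obj C \<and> cod C f \<in> Obj C) \<and>
     (\<forall>a\<in>Obj C. idm C a \<in> Arr C \<and> dom C (idm C a) = a \<and> cod C (idm C a) = a) \<and>
     (\<forall>f\<in>Arr C. \<forall>g\<in>Arr C. cod C f = dom C g \<longrightarrow>
        cmp C g f \<in> Arr C \<and> dom C (cmp C g f) = dom C f \<and> cod C (cmp C g f) = cod C g) \<and>
     (\<forall>f\<in>Arr C. cmp C (idm C (cod C f)) f = f \<and> cmp C f (idm C (dom C f)) = f) \<and>
     (\<forall>f\<in>Arr C. \<forall>g\<in>Arr C. \<forall>h\<in>Arr C. cod C f = dom C g \<and> cod C g = dom C h \<longrightarrow>
        cmp C h (cmp C g f) = cmp C (cmp C h g) f)"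

definition is_functor :: "('o, 'm) cat \<Rightarrow> ('p, 'n) cat \<Rightarrow> ('o \<Rightarrow> 'p) \<Rightarrow> ('m \<Rightarrow> 'n) \<Rightarrow> bool" where
  "is_functor C D Fo Fa \<longleftrightarrow> category C \<and> category D \<and>
     (\<forall>a\<in>Obj C. Fo a \<in> Obj D) \<and>
     (\<forall>f\<in>Arr C. Fa f \<in> Arr D \<and> dom D (Fa f) = Fo (dom C f) \<and> cod D (Fa f) = Fo (cod C f)) \<and>
     (\<forall>a\<in>Obj C. Fa (idm C a) = idm D (Fo a)) \<and>
     (\<forall>f\<in>Arr C. \<forall>g\<in>Arr C. cod C f = dom C g \<longrightarrow> Fa (cmp C g f) = cmp D (Fa g) (Fa f))"

definition faithful :: "('o, 'm) cat \<Rightarrow> ('p, 'n) cat \<Rightarrow> ('o \<Rightarrow> 'p) \<Rightarrow> ('m \<Rightarrow> 'n) \<Rightarrow> bool" where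
  "faithful C D Fo Fa \<longleftrightarrow> is_functor C D Fo Fa \<and>
     (\<forall>f\<in>Arr C. \<forall>g\<in>Arr C. dom C f = dom C g \<and> cod C f = cod C g \<and> Fa f = Fa g \<longrightarrow> f = g)"

text \<open>A square (cA, cB, aM, bM) consists of cA : C \<rightarrow> A, cB : C \<rightarrow> B, aM : A \<rightarrow> M, bM : B \<rightarrow> M.\<close>

type_synonym 'm square = "'m \<times> 'm \<times> 'm \<times> 'm"

definition commuting_square :: "('o, 'm) cat \<Rightarrow> 'm square \<Rightarrow> bool" where
  "commuting_square C s \<longleftrightarrow> (case s of (cA, cB, aM, bM) \<Rightarrow>
     cA \<in> Arr C \<and> cB \<in> Arr C \<and> aM \<in> Arr C \<and> bM \<in> Arr C \<and>
     dom C cA = dom C cB \<and> dom C aM = cod C cA \<and> dom C bM = cod C cB \<and>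
     cod C aM = cod C bM \<and> cmp C aM cA = cmp C bM cB)"

definition indep_rel :: "('o, 'm) cat \<Rightarrow> ('m square \<Rightarrow> bool) \<Rightarrow> bool" where
  "indep_rel C I \<longleftrightarrow> (\<forall>s. I s \<longrightarrow> commuting_square C s)"

definition invariance :: "('o, 'm) cat \<Rightarrow> ('m square \<Rightarrow> bool) \<Rightarrow> bool" where
  "invariance C I \<longleftrightarrow> (\<forall>cA cB aM bM n.
     commuting_square C (cA, cB, aM, bM) \<and> n \<in> Arr C \<and> dom C n = cod C aM \<longrightarrow>
     (I (cA, cB, aM, bM) \<longleftrightarrow> I (cA, cB, cmp C n aM, cmp C n bM)))"

definition existence :: "('o, 'm) cat \<Rightarrow> ('m square \<Rightarrow> bool) \<Rightarrow> bool" where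
  "existence C I \<longleftrightarrow> (\<forall>cA\<in>Arr C. \<forall>cB\<in>Arr C. dom C cA = dom C cB \<longrightarrow>
     (\<exists>aM bM. I (cA, cB, aM, bM)))"

definition uniqueness :: "('o, 'm) cat \<Rightarrow> ('m square \<Rightarrow> bool) \<Rightarrow> bool" where
  "uniqueness C I \<longleftrightarrow> (\<forall>cA cB aM bM aM' bM'.
     I (cA, cB, aM, bM) \<and> I (cA, cB, aM', bM') \<longrightarrow>
     (\<exists>n n'. n \<in> Arr C \<and> n' \<in> Arr C \<and> dom C n = cod C aM \<and> dom C n' = cod C aM' \<and>
        cod C n = cod C n' \<and>
        cmp C n aM = cmp C n' aM' \<and> cmp C n bM = cmp C n' bM'))"

definition preim_rel :: "('o, 'm) cat \<Rightarrow> ('m \<Rightarrow> 'n) \<Rightarrow> ('n square \<Rightarrow> bool) \<Rightarrow> 'm square \<Rightarrow> bool" where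
  "preim_rel C Fa I s \<longleftrightarrow> commuting_square C s \<and>
     (case s of (cA, cB, aM, bM) \<Rightarrow> I (Fa cA, Fa cB, Fa aM, Fa bM))"

definition admits_1_completions ::
  "('o, 'm) cat \<Rightarrow> ('p, 'n) cat \<Rightarrow> ('o \<Rightarrow> 'p) \<Rightarrow> ('m \<Rightarrow> 'n) \<Rightarrow> bool" where
  "admits_1_completions C D Fo Fa \<longleftrightarrow> (\<forall>A\<in>Obj C. \<forall>f\<in>Arr D. dom D f = Fo A \<longrightarrow>
     (\<exists>g h. g \<in> Arr C \<and> dom C g = A \<and> h \<in> Arr D \<and> dom D h = cod D f \<and>
        cod D h = Fo (cod C g) \<and> Fa g = cmp D h f))"

definition admits_2_completions ::
  "('o, 'm) cat \<Rightarrow> ('p, 'n) cat \<Rightarrow> ('o \<Rightarrow> 'p) \<Rightarrow> ('m \<Rightarrow> 'n) \<Rightarrow> ('n square \<Rightarrow> bool) \<Rightarrow> bool" where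
  "admits_2_completions C D Fo Fa I \<longleftrightarrow> (\<forall>cA\<in>Arr C. \<forall>cB\<in>Arr C. \<forall>x y.
     dom C cA = dom C cB \<and> I (Fa cA, Fa cB, x, y) \<longrightarrow>
     (\<exists>E h f g. E \<in> Obj C \<and> h \<in> Arr D \<and> dom D h = cod D x \<and> cod D h = Fo E \<and>
        f \<in> Arr C \<and> dom C f = cod C cA \<and> cod C f = E \<and>
        g \<in> Arr C \<and> dom C g = cod C cB \<and> cod C g = E \<and>
        Fa f = cmp D h x \<and> Fa g = cmp D h y))"

end

theory Submission
  imports Defs
begin

theorem theorem5p7:
  fixes C :: "('o, 'm) cat" and D :: "('p, 'n) cat"
    and Fo :: "'o \<Rightarrow> 'p" and Fa :: "'m \<Rightarrow> 'n" and I :: "'n square \<Rightarrow> bool"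
  assumes "faithful C D Fo Fa"
    and "indep_rel D I"
    and "invariance D I"
  shows "(admits_2_completions C D Fo Fa I \<and> existence D I \<longrightarrow> existence C (preim_rel C Fa I))
       \<and> (admits_1_completions C D Fo Fa \<and> uniqueness D I \<and> existence C (preim_rel C Fa I)
            \<longrightarrow> admits_2_completions C D Fo Fa I)"
proof -
  have fnc: "is_functor C D Fo Fa" and faith: "\<And>f g. f\<in>Arr C \<Longrightarrow> g\<in>Arr C \<Longrightarrow> dom C f = dom C g \<Longrightarrow> cod C f = cod C g \<Longrightarrow> Fa f = Fa g \<Longrightarrow> f = g"
    using assms(1) unfolding faithful_def by blast+
  have cC: "category C" and cD: "category D" using fnc unfolding is_functor_def by auto
  note catC = cC[unfolded category_def] and catD = cD[unfolded category_def]
  have Fob: "\<And>a. a \<in> Obj C \<Longrightarrow> Fo a \<in> Obj D"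
    and Far: "\<And>f. f \<in> Arr C \<Longrightarrow> Fa f \<in> Arr D \<and> dom D (Fa f) = Fo (dom C f) \<and> cod D (Fa f) = Fo (cod C f)"
    and Fcmp: "\<And>f g. f\<in>Arr C \<Longrightarrow> g\<in>Arr C \<Longrightarrow> cod C f = dom C g \<Longrightarrow> Fa (cmp C g f) = cmp D (Fa g) (Fa f)"
    using fnc unfolding is_functor_def by auto
  have cmpC: "\<And>f g. f\<in>Arr C \<Longrightarrow> g\<in>Arr C \<Longrightarrow> cod C f = dom C g \<Longrightarrow> cmp C g f \<in> Arr C \<and> dom C (cmp C g f) = dom C f \<and> cod C (cmp C g f) = cod C g"
    using catC by blast
  have cmpD: "\<And>f g. f\<in>Arr D \<Longrightarrow> g\<in>Arr D \<Longrightarrow> cod D f = dom D g \<Longrightarrow> cmp D g f \<in> Arr D \<and> dom D (cmp D g f) = dom D f \<and> cod D (cmp D g f) = cod D g"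
    using catD by blast
  have assD: "\<And>f g h. f\<in>Arr D \<Longrightarrow> g\<in>Arr D \<Longrightarrow> h\<in>Arr D \<Longrightarrow> cod D f = dom D g \<Longrightarrow> cod D g = dom D h \<Longrightarrow> cmp D h (cmp D g f) = cmp D (cmp D h g) f"
    using catD by blast
  have codC: "\<And>f. f \<in> Arr C \<Longrightarrow> cod C f \<in> Obj C" using catC by blast
  have sq: "\<And>s. I s \<Longrightarrow> commuting_square D s" using assms(2) unfolding indep_rel_def by blast
  have inv: "\<And>cA cB aM bM n. commuting_square D (cA, cB, aM, bM) \<Longrightarrow> n \<in> Arr D \<Longrightarrow> dom D n = cod D aM \<Longrightarrow>
     I (cA, cB, aM, bM) \<Longrightarrow> I (cA, cB, cmp D n aM, cmp D n bM)"
    using assms(3) unfolding invariance_def by blast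
  show ?thesis
  proof (intro conjI impI)
    assume H: "admits_2_completions C D Fo Fa I \<and> existence D I"
    show "existence C (preim_rel C Fa I)"
      unfolding existence_def
    proof (intro ballI impI)
      fix cA cB assume cA: "cA \<in> Arr C" and cB: "cB \<in> Arr C" and d: "dom C cA = dom C cB"
      have "Fa cA \<in> Arr D" "Fa cB \<in> Arr D" "dom D (Fa cA) = dom D (Fa cB)"
        using Far[OF cA] Far[OF cB] d by auto
      then obtain x y where Ix: "I (Fa cA, Fa cB, x, y)"
        using H unfolding existence_def by blast
      then obtain E h f g where c: "E \<in> Obj C \<and> h \<in> Arr D \<and> dom D h = cod D x \<and> cod D h = Fo E \<and>
        f \<in> Arr C \<and> dom C f = cod C cA \<and> cod C f = E \<and>
        g \<in> Arr C \<and> dom C g = cod C cB \<and> cod C g = E \<and>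
        Fa f = cmp D h x \<and> Fa g = cmp D h y"
        using H cA cB d unfolding admits_2_completions_def by blast
      have s: "commuting_square D (Fa cA, Fa cB, x, y)" using sq[OF Ix] .
      hence sx: "x \<in> Arr D" "y \<in> Arr D" "dom D x = cod D (Fa cA)" "dom D y = cod D (Fa cB)"
        "cod D x = cod D y" "cmp D x (Fa cA) = cmp D y (Fa cB)"
        unfolding commuting_square_def by auto
      have I2: "I (Fa cA, Fa cB, Fa f, Fa g)" using inv[OF s _ _ Ix] c by simp
      have e1: "Fa (cmp C f cA) = cmp D h (cmp D x (Fa cA))"
        using Fcmp[OF cA, of f] c assD[of "Fa cA" x h] sx Far[OF cA] by auto
      have e2: "Fa (cmp C g cB) = cmp D h (cmp D y (Fa cB))"
        using Fcmp[OF cB, of g] c assD[of "Fa cB" y h] sx Far[OF cB] sx(5) by auto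
      have eq: "cmp C f cA = cmp C g cB"
        apply (rule faith)
        using cmpC[OF cA, of f] cmpC[OF cB, of g] c d e1 e2 sx(6) by auto
      have "commuting_square C (cA, cB, f, g)"
        unfolding commuting_square_def using cA cB c d eq by auto
      thus "\<exists>aM bM. preim_rel C Fa I (cA, cB, aM, bM)"
        unfolding preim_rel_def using I2 by auto
    qed
  next
    assume H: "admits_1_completions C D Fo Fa \<and> uniqueness D I \<and> existence C (preim_rel C Fa I)"
    show "admits_2_completions C D Fo Fa I"
      unfolding admits_2_completions_def
    proof (intro ballI allI impI)
      fix cA cB x y assume cA: "cA \<in> Arr C" and cB: "cB \<in> Arr C"
        and dI: "dom C cA = dom C cB \<and> I (Fa cA, Fa cB, x, y)"
      obtain aM bM where P: "preim_rel C Fa I (cA, cB, aM, bM)"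
        using H cA cB dI unfolding existence_def by blast
      have sC: "commuting_square C (cA, cB, aM, bM)" and IP: "I (Fa cA, Fa cB, Fa aM, Fa bM)"
        using P unfolding preim_rel_def by auto
      hence sCx: "aM \<in> Arr C" "bM \<in> Arr C" "dom C aM = cod C cA" "dom C bM = cod C cB"
        "cod C aM = cod C bM"
        unfolding commuting_square_def by auto
      have s: "commuting_square D (Fa cA, Fa cB, x, y)" using sq dI by blast
      hence sx: "x \<in> Arr D" "y \<in> Arr D" "dom D x = cod D (Fa cA)" "dom D y = cod D (Fa cB)"
        "cod D x = cod D y"
        unfolding commuting_square_def by auto
      obtain n n' where nn: "n \<in> Arr D \<and> n' \<in> Arr D \<and> dom D n = cod D x \<and> dom D n' = cod D (Fa aM) \<and>
        cod D n = cod D n' \<and>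
        cmp D n x = cmp D n' (Fa aM) \<and> cmp D n y = cmp D n' (Fa bM)"
        using H dI IP unfolding uniqueness_def by blast
      have Mob: "cod C aM \<in> Obj C" using codC sCx by blast
      have "dom D n' = Fo (cod C aM)" using nn Far[OF sCx(1)] by auto
      then obtain g0 h0 where g0: "g0 \<in> Arr C \<and> dom C g0 = cod C aM \<and> h0 \<in> Arr D \<and> dom D h0 = cod D n' \<and>
        cod D h0 = Fo (cod C g0) \<and> Fa g0 = cmp D h0 n'"
        using H Mob nn unfolding admits_1_completions_def by blast
      have hA: "cmp D h0 n \<in> Arr D \<and> dom D (cmp D h0 n) = dom D n \<and> cod D (cmp D h0 n) = cod D h0"
        using cmpD[of n h0] nn g0 by auto
      have fA: "cmp C g0 aM \<in> Arr C \<and> dom C (cmp C g0 aM) = dom C aM \<and> cod C (cmp C g0 aM) = cod C g0"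
        using cmpC[OF sCx(1), of g0] g0 by auto
      have gA: "cmp C g0 bM \<in> Arr C \<and> dom C (cmp C g0 bM) = dom C bM \<and> cod C (cmp C g0 bM) = cod C g0"
        using cmpC[OF sCx(2), of g0] g0 sCx(5) by auto
      have Fa_aM: "Fa aM \<in> Arr D \<and> cod D (Fa aM) = Fo (cod C aM)" using Far[OF sCx(1)] by auto
      have Fa_bM: "Fa bM \<in> Arr D \<and> cod D (Fa bM) = Fo (cod C aM)" using Far[OF sCx(2)] sCx(5) by auto
      have ef: "Fa (cmp C g0 aM) = cmp D (cmp D h0 n) x"
      proof -
        have "Fa (cmp C g0 aM) = cmp D (cmp D h0 n') (Fa aM)" using Fcmp[OF sCx(1), of g0] g0 by auto
        also have "\<dots> = cmp D h0 (cmp D n' (Fa aM))" using assD[of "Fa aM" n' h0] Fa_aM nn g0 by auto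
        also have "\<dots> = cmp D h0 (cmp D n x)" using nn by simp
        also have "\<dots> = cmp D (cmp D h0 n) x" using assD[of x n h0] sx nn g0 by auto
        finally show ?thesis .
      qed
      have eg: "Fa (cmp C g0 bM) = cmp D (cmp D h0 n) y"
      proof -
        have "Fa (cmp C g0 bM) = cmp D (cmp D h0 n') (Fa bM)" using Fcmp[OF sCx(2), of g0] g0 sCx(5) by auto
        also have "\<dots> = cmp D h0 (cmp D n' (Fa bM))" using assD[of "Fa bM" n' h0] Fa_bM Fa_aM nn g0 by auto
        also have "\<dots> = cmp D h0 (cmp D n y)" using nn by simp
        also have "\<dots> = cmp D (cmp D h0 n) y" using assD[of y n h0] sx nn g0 by auto
        finally show ?thesis .
      qed
      show "\<exists>E h f g. E \<in> Obj C \<and> h \<in> Arr D \<and> dom D h = cod D x \<and> cod D h = Fo E \<and>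
        f \<in> Arr C \<and> dom C f = cod C cA \<and> cod C f = E \<and>
        g \<in> Arr C \<and> dom C g = cod C cB \<and> cod C g = E \<and>
        Fa f = cmp D h x \<and> Fa g = cmp D h y"
        apply (rule exI[of _ "cod C g0"], rule exI[of _ "cmp D h0 n"],
               rule exI[of _ "cmp C g0 aM"], rule exI[of _ "cmp C g0 bM"])
        using codC g0 hA fA gA nn sCx ef eg by auto
    qed
  qed
qed

end
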